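(* Under the hypotheses of the preceding statement (fixed $q\in\{1,2,\ldots\}$ and $\alpha>0$; $n,p\to\infty$ with $n/p\to\gamma\in[0,\infty]$, $m/p\to\kappa\in[1,\infty)$, $m\ge p$; data i.i.d. $N_p(0,I_p)$; and $(\lambda_{\max}(S)-\mu_{n,p})/\sigma_{n,p}$ converging in distribution), the largest eigenvalue $\lambda^{(q)}_{\max}$ of the power inverse Wishart MAP estimator with prior parameters $(\alpha I_p,m,q)$ satisfies $$\lambda^{(q)}_{\max}\xrightarrow{P}1+\frac{2\sqrt\gamma-q\kappa}{1+\gamma+q\kappa},$$ where the fraction is interpreted as $0$ when $\gamma=\infty$.
   Context: $S$ is the sample covariance $\frac1n\sum_i(X_i-\bar X)(X_i-\bar X)^\top$; $\mu_{n,p}=(1+\sqrt{p/n})^2$, $\sigma_{n,p}=\frac{\sqrt n+\sqrt p}{n}(n^{-1/2}+p^{-1/2})^{1/3}$. With $N=n+p+qm+1$, the MAP estimator has the same eigenvectors as $S$ and maps each eigenvalue $s$ of $S$ to the unique positive solution $\mu$ of $N\mu^q-ns\mu^{q-1}-q\alpha^q=0$. *)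

theory Defs
  imports "HOL-Probability.Probability" "Jordan_Normal_Form.Char_Poly"
begin

text \<open>Data: row i < n, coordinate j < p, given as x i j.\<close>

definition sample_mean :: "nat \<Rightarrow> (nat \<Rightarrow> nat \<Rightarrow> real) \<Rightarrow> nat \<Rightarrow> real" where
  "sample_mean n x j = (\<Sum>i<n. x i j) / real n"

definition sample_cov :: "nat \<Rightarrow> nat \<Rightarrow> (nat \<Rightarrow> nat \<Rightarrow> real) \<Rightarrow> real mat" where
  "sample_cov n p x = mat p p (\<lambda>(j, l). (1 / real n) *
      (\<Sum>i<n. (x i j - sample_mean n x j) * (x i l - sample_mean n x l)))"

definition lambda_max :: "real mat \<Rightarrow> real" where
  "lambda_max A = Max {s. eigenvalue A s}"

definition mu_np :: "nat \<Rightarrow> nat \<Rightarrow> real" where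
  "mu_np n p = (1 + sqrt (real p / real n))^2"

definition sigma_np :: "nat \<Rightarrow> nat \<Rightarrow> real" where
  "sigma_np n p = (sqrt (real n) + sqrt (real p)) / real n
     * (1 / sqrt (real n) + 1 / sqrt (real p)) powr (1/3)"

text \<open>Eigenvalue map of the power inverse Wishart MAP estimator with prior (alpha I_p, m, q):
  s is mapped to the unique positive root mu of N mu^q - n s mu^(q-1) - q alpha^q = 0,
  where N = n + p + q m + 1.\<close>
definition map_eig :: "nat \<Rightarrow> nat \<Rightarrow> nat \<Rightarrow> nat \<Rightarrow> real \<Rightarrow> real \<Rightarrow> real" where
  "map_eig n p m q \<alpha> s = (THE \<mu>. \<mu> > 0 \<and>
     real (n + p + q * m + 1) * \<mu> ^ q - real n * s * \<mu> ^ (q - 1) - real q * \<alpha> ^ q = 0)"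

text \<open>The MAP estimator shares eigenvectors with S, so its eigenvalues are the images of
  the eigenvalues of S; this is its largest eigenvalue.\<close>
definition map_lambda_max :: "nat \<Rightarrow> nat \<Rightarrow> nat \<Rightarrow> nat \<Rightarrow> real \<Rightarrow> real mat \<Rightarrow> real" where
  "map_lambda_max n p m q \<alpha> S = Max (map_eig n p m q \<alpha> ` {s. eigenvalue S s})"

definition limit_const :: "nat \<Rightarrow> ereal \<Rightarrow> real \<Rightarrow> real" where
  "limit_const q \<gamma> \<kappa> = (if \<gamma> = \<infinity> then 1 else
     1 + (2 * sqrt (real_of_ereal \<gamma>) - real q * \<kappa>) / (1 + real_of_ereal \<gamma> + real q * \<kappa>))"

end

theory Submission
  imports Defs
begin

no_notation Finite_Cartesian_Product.vec.vec_nth (infixl \<open>$\<close> 90)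

lemma root_form:
  fixes N a c \<mu> :: real and q :: nat
  assumes "q \<ge> 1"
  shows "N * \<mu> ^ q - a * \<mu> ^ (q - 1) - c = \<mu> ^ (q - 1) * (N * \<mu> - a) - c"
proof (cases q)
  case 0 then show ?thesis using assms by simp
next
  case (Suc k) then show ?thesis by (simp add: algebra_simps)
qed

lemma root_ex1:
  fixes N a \<alpha> :: real and q :: nat
  assumes N: "N > 0" and a: "a \<ge> 0" and al: "\<alpha> > 0" and q: "q \<ge> 1"
  shows "\<exists>!\<mu>. \<mu> > 0 \<and> N * \<mu> ^ q - a * \<mu> ^ (q - 1) - real q * \<alpha> ^ q = 0"
proof -
  define c where "c = real q * \<alpha> ^ q"
  have c: "c > 0" using q al by (simp add: c_def)
  define f where "f = (\<lambda>\<mu>::real. \<mu> ^ (q - 1) * (N * \<mu> - a) - c)"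
  have feq: "\<And>\<mu>. N * \<mu> ^ q - a * \<mu> ^ (q - 1) - real q * \<alpha> ^ q = f \<mu>"
    using root_form[OF q] by (simp add: f_def c_def)
  define B where "B = 1 + c / N"
  have B: "B \<ge> 1" using c N by (simp add: B_def)
  have f0: "f (a / N) < 0" using N c by (simp add: f_def)
  have fB: "f (a / N + B) \<ge> 0"
  proof -
    have "a / N \<ge> 0" using a N by simp
    then have ge1: "a / N + B \<ge> 1" using B by linarith
    have "(a / N + B) ^ (q - 1) \<ge> 1" using ge1 by (simp add: one_le_power)
    moreover have "N * (a / N + B) - a = N * B" using N by (simp add: field_simps)
    moreover have "N * B \<ge> c" using N c by (simp add: B_def field_simps)
    moreover have "N * B \<ge> 0" using N B by simp
    ultimately have "(a / N + B) ^ (q - 1) * (N * (a / N + B) - a) \<ge> 1 * c"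
      using mult_mono[of 1 "(a / N + B) ^ (q - 1)" c "N * B"] c by simp
    then show ?thesis by (simp add: f_def)
  qed
  have cont: "\<And>x. isCont f x" unfolding f_def by (intro continuous_intros)
  have "a / N \<le> a / N + B" using B by simp
  then have "\<exists>x. a / N \<le> x \<and> x \<le> a / N + B \<and> f x = 0"
    using IVT[of f "a/N" 0 "a/N + B"] f0 fB cont by (meson less_imp_le)
  then obtain r where r: "a / N \<le> r" "r \<le> a / N + B" "f r = 0" by blast
  have rgt: "r > a / N" using r f0 by (cases "r = a / N") auto
  have "a / N \<ge> 0" using a N by simp
  then have rpos: "r > 0" using rgt by linarith
  have uniq: "\<mu> = r" if "\<mu> > 0" "f \<mu> = 0" for \<mu>
  proof -
    have pos: "\<And>x. x > 0 \<Longrightarrow> f x = 0 \<Longrightarrow> N * x - a > 0"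
    proof -
      fix x :: real assume "x > 0" "f x = 0"
      then have "x ^ (q - 1) * (N * x - a) = c" by (simp add: f_def)
      moreover have "x ^ (q - 1) > 0" using \<open>x > 0\<close> by simp
      ultimately show "N * x - a > 0" using c by (metis zero_less_mult_pos)
    qed
    have mono: "f x < f y" if "0 < x" "x < y" "N * x - a > 0" for x y
    proof -
      have "x ^ (q - 1) \<le> y ^ (q - 1)" using that by (simp add: power_mono)
      moreover have "N * x - a < N * y - a" using that N by simp
      moreover have "x ^ (q - 1) > 0" using that by simp
      ultimately have "x ^ (q - 1) * (N * x - a) < y ^ (q - 1) * (N * y - a)"
      proof -
        assume h1: "x ^ (q - 1) \<le> y ^ (q - 1)" and h2: "N * x - a < N * y - a" and h3: "x ^ (q - 1) > 0"
        have "x ^ (q - 1) * (N * x - a) \<le> y ^ (q - 1) * (N * x - a)"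
          using h1 that(3) by (intro mult_right_mono) auto
        also have "\<dots> < y ^ (q - 1) * (N * y - a)"
          using h1 h2 h3 by (intro mult_strict_left_mono) auto
        finally show ?thesis .
      qed
      then show ?thesis by (simp add: f_def)
    qed
    show ?thesis
    proof (rule ccontr)
      assume "\<mu> \<noteq> r"
      then consider "\<mu> < r" | "r < \<mu>" by linarith
      then show False
      proof cases
        case 1
        have "f \<mu> < f r" using 1 that pos[of \<mu>] by (intro mono) auto
        then show ?thesis using that r(3) by simp
      next
        case 2
        have "f r < f \<mu>" using 2 rpos r(3) pos[of r] by (intro mono) auto
        then show ?thesis using that r(3) by simp
      qed
    qed
  qed
  show ?thesis unfolding feq using rpos r(3) uniq by blast
qed

lemma root_bounds:
  fixes N a \<alpha> t :: real and q :: nat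
  assumes N: "N > 0" and a: "a \<ge> 0" and al: "\<alpha> > 0" and q: "q \<ge> 1"
    and \<mu>: "\<mu> > 0" "N * \<mu> ^ q - a * \<mu> ^ (q - 1) - real q * \<alpha> ^ q = 0"
  shows "\<mu> > a / N" and "t > 0 \<Longrightarrow> N * t ^ q \<ge> real q * \<alpha> ^ q \<Longrightarrow> \<mu> \<le> a / N + t"
proof -
  define c where "c = real q * \<alpha> ^ q"
  have c: "c > 0" using q al by (simp add: c_def)
  have eq: "\<mu> ^ (q - 1) * (N * \<mu> - a) = c" using \<mu>(2) root_form[OF q] by (simp add: c_def)
  have p: "\<mu> ^ (q - 1) > 0" using \<mu> by simp
  have gt: "N * \<mu> - a > 0" using eq p c by (metis zero_less_mult_pos)
  then show "\<mu> > a / N" using N by (simp add: field_simps)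
  assume t: "t > 0" and tq: "N * t ^ q \<ge> real q * \<alpha> ^ q"
  show "\<mu> \<le> a / N + t"
  proof (rule ccontr)
    assume "\<not> \<mu> \<le> a / N + t"
    then have h: "\<mu> > a / N + t" by simp
    have "a / N \<ge> 0" using a N by simp
    then have "\<mu> > t" using h by linarith
    then have "t ^ (q - 1) \<le> \<mu> ^ (q - 1)" using t by (simp add: power_mono)
    moreover have "N * \<mu> - a > N * t" using h N by (simp add: field_simps)
    moreover have "t ^ (q - 1) > 0" using t by simp
    ultimately have lt: "t ^ (q - 1) * (N * t) < \<mu> ^ (q - 1) * (N * \<mu> - a)"
    proof -
      assume h1: "t ^ (q - 1) \<le> \<mu> ^ (q - 1)" and h2: "N * t < N * \<mu> - a" and h3: "t ^ (q - 1) > 0"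
      have "t ^ (q - 1) * (N * t) < t ^ (q - 1) * (N * \<mu> - a)"
        using h2 h3 by (intro mult_strict_left_mono) auto
      also have "\<dots> \<le> \<mu> ^ (q - 1) * (N * \<mu> - a)"
        using h1 gt by (intro mult_right_mono) auto
      finally show ?thesis .
    qed
    have "t ^ q = t * t ^ (q - 1)" using q by (cases q) auto
    then have "t ^ (q - 1) * (N * t) = N * t ^ q" by (simp add: algebra_simps)
    then show False using lt eq tq unfolding c_def by linarith
  qed
qed

lemma evec_entry:
  fixes A :: "'a::comm_ring_1 mat"
  assumes A: "A \<in> carrier_mat d d" and v: "v \<in> carrier_vec d" and e: "A *\<^sub>v v = k \<cdot>\<^sub>v v" and j: "j < d"
  shows "(\<Sum>l<d. A $$ (j, l) * v $ l) = k * v $ j"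
proof -
  have "(A *\<^sub>v v) $ j = (k \<cdot>\<^sub>v v) $ j" using e by simp
  moreover have "(A *\<^sub>v v) $ j = (\<Sum>l<d. A $$ (j, l) * v $ l)"
    using A v j by (simp add: scalar_prod_def atLeast0LessThan)
  moreover have "(k \<cdot>\<^sub>v v) $ j = k * v $ j" using v j by simp
  ultimately show ?thesis by simp
qed

lemma vec_nonzero:
  assumes v: "v \<in> carrier_vec d" and nz: "v \<noteq> 0\<^sub>v d"
  shows "\<exists>j<d. v $ j \<noteq> 0"
proof (rule ccontr)
  assume "\<not> ?thesis"
  then have "v = 0\<^sub>v d" using v by (intro eq_vecI) auto
  then show False using nz by simp
qed

lemma eig_finite:
  fixes A :: "real mat"
  assumes A: "A \<in> carrier_mat d d"
  shows "finite {s. eigenvalue A s}"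
proof -
  have "char_poly A \<noteq> 0" using degree_monic_char_poly[OF A] by auto
  then have "finite {s. poly (char_poly A) s = 0}" by (rule poly_roots_finite)
  then show ?thesis using eigenvalue_root_char_poly[OF A] by simp
qed

lemma eig_exists:
  fixes A :: "real mat"
  assumes A: "A \<in> carrier_mat d d" and d: "d \<ge> 1"
    and sym: "\<And>j l. j < d \<Longrightarrow> l < d \<Longrightarrow> A $$ (j, l) = A $$ (l, j)"
  shows "\<exists>s. eigenvalue A s"
proof -
  define B where "B = map_mat complex_of_real A"
  have B: "B \<in> carrier_mat d d" using A by (simp add: B_def)
  have cpB: "char_poly B = map_poly complex_of_real (char_poly A)"
    unfolding B_def by (rule of_real_hom.char_poly_hom[OF A])
  have "degree (char_poly B) = d" using degree_monic_char_poly[OF B] by simp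
  then have "\<not> constant (poly (char_poly B))" using d by (simp add: constant_degree)
  then obtain z where z: "poly (char_poly B) z = 0" using fundamental_theorem_of_algebra by blast
  then have "eigenvalue B z" using eigenvalue_root_char_poly[OF B] by simp
  then obtain v where v: "v \<in> carrier_vec d" "v \<noteq> 0\<^sub>v d" "B *\<^sub>v v = z \<cdot>\<^sub>v v"
    unfolding eigenvalue_def eigenvector_def using B by auto
  define w where "w = (\<lambda>j. v $ j)"
  have ent: "(\<Sum>l<d. complex_of_real (A $$ (j, l)) * w l) = z * w j" if "j < d" for j
    using evec_entry[OF B v(1) v(3) that] A that by (simp add: B_def w_def)
  define T where "T = (\<Sum>j<d. \<Sum>l<d. cnj (w j) * complex_of_real (A $$ (j, l)) * w l)"
  define R where "R = (\<Sum>j<d. cnj (w j) * w j)"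
  have TR: "T = z * R"
  proof -
    have "T = (\<Sum>j<d. cnj (w j) * (\<Sum>l<d. complex_of_real (A $$ (j, l)) * w l))"
      unfolding T_def by (simp add: sum_distrib_left mult.assoc)
    also have "\<dots> = (\<Sum>j<d. cnj (w j) * (z * w j))" using ent by simp
    also have "\<dots> = z * R" unfolding R_def by (simp add: sum_distrib_left algebra_simps)
    finally show ?thesis .
  qed
  have cT: "cnj T = T"
  proof -
    have "cnj T = (\<Sum>j<d. \<Sum>l<d. w j * complex_of_real (A $$ (j, l)) * cnj (w l))"
      unfolding T_def by simp
    also have "\<dots> = (\<Sum>l<d. \<Sum>j<d. w j * complex_of_real (A $$ (j, l)) * cnj (w l))"
      by (rule sum.swap)
    also have "\<dots> = T" unfolding T_def
      by (intro sum.cong refl) (simp add: sym mult.commute mult.left_commute)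
    finally show ?thesis .
  qed
  have Rreal: "R = complex_of_real (\<Sum>j<d. (cmod (w j))^2)"
    unfolding R_def of_real_sum by (intro sum.cong refl) (simp add: complex_norm_square[symmetric] mult.commute)
  obtain j0 where j0: "j0 < d" "w j0 \<noteq> 0" using vec_nonzero[OF v(1) v(2)] w_def by auto
  have "(\<Sum>j<d. (cmod (w j))^2) \<ge> (cmod (w j0))^2"
    using j0 by (intro member_le_sum) auto
  moreover have "(cmod (w j0))^2 > 0" using j0 by simp
  ultimately have Rpos: "(\<Sum>j<d. (cmod (w j))^2) > 0" by linarith
  have "cnj z * R = z * R"
  proof -
    have cR: "cnj R = R" using Rreal by simp
    have "cnj T = cnj z * cnj R" using TR complex_cnj_mult by metis
    then have "cnj T = cnj z * R" using cR by metis
    then show ?thesis using cT TR by metis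
  qed
  moreover have "R \<noteq> 0"
  proof -
    define Rr where "Rr = (\<Sum>j<d. (cmod (w j))^2)"
    have "Rr \<noteq> 0" using Rpos unfolding Rr_def by linarith
    then have "complex_of_real Rr \<noteq> 0" by simp
    moreover have "R = complex_of_real Rr" by (simp only: Rreal Rr_def)
    ultimately show ?thesis by simp
  qed
  ultimately have "cnj z = z" by simp
  then have "Im (cnj z) = Im z" by simp
  then have "Im z = 0" by simp
  then have zr: "z = complex_of_real (Re z)" by (simp add: complex_eq_iff)
  have pm: "poly (char_poly B) (complex_of_real (Re z)) = complex_of_real (poly (char_poly A) (Re z))"
    unfolding cpB by (rule of_real_hom.poly_map_poly)
  have "complex_of_real (poly (char_poly A) (Re z)) = 0"
    using z zr pm by simp
  then have "poly (char_poly A) (Re z) = 0" by simp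
  then show ?thesis using eigenvalue_root_char_poly[OF A] by blast
qed

lemma sc_carrier: "sample_cov n p x \<in> carrier_mat p p"
  by (simp add: sample_cov_def)

lemma sc_entry:
  assumes "j < p" "l < p"
  shows "sample_cov n p x $$ (j, l) = (1 / real n) *
      (\<Sum>i<n. (x i j - sample_mean n x j) * (x i l - sample_mean n x l))"
  using assms by (simp add: sample_cov_def)

lemma sc_sym:
  assumes "j < p" "l < p"
  shows "sample_cov n p x $$ (j, l) = sample_cov n p x $$ (l, j)"
  using assms by (simp add: sc_entry mult.commute)

lemma sc_psd:
  assumes n: "n \<ge> 1" and e: "eigenvalue (sample_cov n p x) s"
  shows "s \<ge> 0"
proof -
  define A where "A = sample_cov n p x"
  have A: "A \<in> carrier_mat p p" by (simp add: A_def sc_carrier)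
  obtain v where v: "v \<in> carrier_vec p" "v \<noteq> 0\<^sub>v p" "A *\<^sub>v v = s \<cdot>\<^sub>v v"
    using e A unfolding eigenvalue_def eigenvector_def A_def by auto
  define c where "c = (\<lambda>i j. x i j - sample_mean n x j)"
  define w where "w = (\<lambda>j. v $ j)"
  have ent: "(\<Sum>l<p. A $$ (j, l) * w l) = s * w j" if "j < p" for j
    using evec_entry[OF A v(1) v(3) that] by (simp add: w_def)
  define Q where "Q = (\<Sum>j<p. w j * (\<Sum>l<p. A $$ (j, l) * w l))"
  have Q1: "Q = s * (\<Sum>j<p. (w j)^2)"
    unfolding Q_def using ent by (simp add: sum_distrib_left power2_eq_square algebra_simps)
  have "(\<Sum>i<n. (\<Sum>j<p. w j * c i j)^2) = (\<Sum>i<n. \<Sum>j<p. \<Sum>l<p. w j * c i j * (c i l * w l))"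
    by (simp add: power2_eq_square sum_product mult.commute mult.left_commute)
  also have "\<dots> = (\<Sum>j<p. \<Sum>i<n. \<Sum>l<p. w j * c i j * (c i l * w l))"
    by (rule sum.swap)
  also have "\<dots> = (\<Sum>j<p. \<Sum>l<p. \<Sum>i<n. w j * c i j * (c i l * w l))"
    by (rule sum.cong[OF refl], rule sum.swap)
  also have "\<dots> = real n * Q"
    unfolding Q_def sum_distrib_left
    by (intro sum.cong refl) (simp add: A_def sc_entry c_def sum_distrib_left sum_distrib_right n mult.commute mult.left_commute)
  finally have Qsq: "real n * Q = (\<Sum>i<n. (\<Sum>j<p. w j * c i j)^2)" by simp
  have "real n * Q \<ge> 0" unfolding Qsq by (intro sum_nonneg) auto
  then have Qnn: "Q \<ge> 0" using n by (simp add: zero_le_mult_iff)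
  obtain j0 where j0: "j0 < p" "w j0 \<noteq> 0" using vec_nonzero[OF v(1) v(2)] w_def by auto
  have "(\<Sum>j<p. (w j)^2) \<ge> (w j0)^2" using j0 by (intro member_le_sum) auto
  moreover have "(w j0)^2 > 0" using j0 by simp
  ultimately have "(\<Sum>j<p. (w j)^2) > 0" by linarith
  then show ?thesis using Qnn Q1 by (simp add: zero_le_mult_iff)
qed

lemma map_eig_props:
  fixes t :: real
  assumes q: "q \<ge> 1" and al: "\<alpha> > 0" and s: "s \<ge> 0"
  shows "map_eig n p m q \<alpha> s > real n * s / real (n + p + q * m + 1)"
    and "t > 0 \<Longrightarrow> real (n + p + q * m + 1) * t ^ q \<ge> real q * \<alpha> ^ q \<Longrightarrow>
          map_eig n p m q \<alpha> s \<le> real n * s / real (n + p + q * m + 1) + t"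
proof -
  define N where "N = real (n + p + q * m + 1)"
  have N: "N > 0" unfolding N_def by (rule of_nat_0_less_iff[THEN iffD2]) simp
  have a: "real n * s \<ge> 0" using s by simp
  have ex: "\<exists>!\<mu>. \<mu> > 0 \<and> N * \<mu> ^ q - real n * s * \<mu> ^ (q - 1) - real q * \<alpha> ^ q = 0"
    by (rule root_ex1[OF N a al q])
  have def: "map_eig n p m q \<alpha> s = (THE \<mu>. \<mu> > 0 \<and> N * \<mu> ^ q - real n * s * \<mu> ^ (q - 1) - real q * \<alpha> ^ q = 0)"
    by (simp add: map_eig_def N_def)
  have th: "map_eig n p m q \<alpha> s > 0 \<and> N * (map_eig n p m q \<alpha> s) ^ q - real n * s * (map_eig n p m q \<alpha> s) ^ (q - 1) - real q * \<alpha> ^ q = 0"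
    unfolding def by (rule theI'[OF ex])
  show "map_eig n p m q \<alpha> s > real n * s / real (n + p + q * m + 1)"
    using root_bounds(1)[OF N a al q conjunct1[OF th] conjunct2[OF th]] by (simp add: N_def)
  show "t > 0 \<Longrightarrow> real (n + p + q * m + 1) * t ^ q \<ge> real q * \<alpha> ^ q \<Longrightarrow>
          map_eig n p m q \<alpha> s \<le> real n * s / real (n + p + q * m + 1) + t"
    using root_bounds(2)[OF N a al q conjunct1[OF th] conjunct2[OF th], of t] by (simp add: N_def)
qed

lemma key_det:
  fixes t :: real
  assumes q: "q \<ge> 1" and al: "\<alpha> > 0" and n: "n \<ge> 1" and p: "p \<ge> 1" and t: "t > 0"
    and tq: "real (n + p + q * m + 1) * t ^ q \<ge> real q * \<alpha> ^ q"
  shows "\<bar>map_lambda_max n p m q \<alpha> (sample_cov n p x)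
           - real n * lambda_max (sample_cov n p x) / real (n + p + q * m + 1)\<bar> \<le> t"
proof -
  define N where "N = real (n + p + q * m + 1)"
  have N: "N > 0" unfolding N_def by (rule of_nat_0_less_iff[THEN iffD2]) simp
  define S where "S = sample_cov n p x"
  define E where "E = {s. eigenvalue S s}"
  define g where "g = map_eig n p m q \<alpha>"
  have fin: "finite E" unfolding E_def S_def by (rule eig_finite[OF sc_carrier])
  have ne: "E \<noteq> {}" unfolding E_def S_def
    using eig_exists[OF sc_carrier p sc_sym] by auto
  have nn: "\<And>s. s \<in> E \<Longrightarrow> s \<ge> 0" unfolding E_def S_def using sc_psd[OF n] by auto
  define L where "L = Max E"
  have LE: "L \<in> E" unfolding L_def using fin ne by (rule Max_in)
  have Lge: "\<And>s. s \<in> E \<Longrightarrow> s \<le> L" unfolding L_def using fin by simp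
  have lm: "lambda_max S = L" by (simp add: lambda_max_def L_def E_def)
  have mm: "map_lambda_max n p m q \<alpha> S = Max (g ` E)" by (simp add: map_lambda_max_def g_def E_def)
  have fin2: "finite (g ` E)" using fin by simp
  have ne2: "g ` E \<noteq> {}" using ne by simp
  obtain s0 where s0: "s0 \<in> E" "Max (g ` E) = g s0" using Max_in[OF fin2 ne2] by auto
  have up: "Max (g ` E) \<le> real n * L / N + t"
  proof -
    have "g s0 \<le> real n * s0 / N + t"
      using map_eig_props(2)[OF q al nn[OF s0(1)] t tq] by (simp add: g_def N_def)
    also have "real n * s0 / N \<le> real n * L / N"
      using Lge[OF s0(1)] N by (intro divide_right_mono mult_left_mono) auto
    finally show ?thesis using s0 by simp
  qed
  have lo: "Max (g ` E) > real n * L / N"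
  proof -
    have "g L > real n * L / N" using map_eig_props(1)[OF q al nn[OF LE]] by (simp add: g_def N_def)
    also have "g L \<le> Max (g ` E)" using fin2 LE by simp
    finally show ?thesis .
  qed
  show ?thesis using up lo unfolding S_def[symmetric] N_def[symmetric] lm mm by simp
qed

lemma distr_emeasure_cases:
  "emeasure (distr M borel f) B = 0 \<or> emeasure (distr M borel f) B = emeasure M (f -` B \<inter> space M)"
  unfolding distr_def emeasure_measure_of_conv by auto

lemma distr_Ioc:
  fixes f :: "'a \<Rightarrow> real" and a b :: real
  assumes M: "prob_space M" and ab: "a \<le> b"
  shows "measure (distr M borel f) {a<..b} = cdf (distr M borel f) b - cdf (distr M borel f) a"
    and "measure (distr M borel f) {a<..b} > 0 \<Longrightarrow>
          {\<omega> \<in> space M. a < f \<omega> \<and> f \<omega> \<le> b} \<in> sets M \<and>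
          measure M {\<omega> \<in> space M. a < f \<omega> \<and> f \<omega> \<le> b} = measure (distr M borel f) {a<..b}"
proof -
  define D where "D = distr M borel f"
  have le1: "emeasure D B \<le> 1" for B
    using distr_emeasure_cases[of M f B] prob_space.emeasure_le_1[OF M] unfolding D_def by auto
  have fin: "finite_measure D"
  proof
    show "emeasure D (space D) \<noteq> \<infinity>" using le1[of "space D"] by (auto simp: infinity_ennreal_def top_unique)
  qed
  have "measure D ({..b} - {..a}) = measure D {..b} - measure D {..a}"
    by (rule finite_measure.finite_measure_Diff[OF fin]) (use ab in \<open>auto simp: D_def\<close>)
  moreover have "{..b} - {..a} = {a<..b}" by auto
  ultimately show "measure (distr M borel f) {a<..b} = cdf (distr M borel f) b - cdf (distr M borel f) a"
    by (simp add: D_def cdf_def)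
  assume pos: "measure (distr M borel f) {a<..b} > 0"
  define C where "C = {\<omega> \<in> space M. a < f \<omega> \<and> f \<omega> \<le> b}"
  have Ceq: "f -` {a<..b} \<inter> space M = C" by (auto simp: C_def)
  have "emeasure D {a<..b} \<noteq> 0" using pos unfolding D_def by (auto simp: measure_def)
  then have e: "emeasure D {a<..b} = emeasure M C"
    using distr_emeasure_cases[of M f "{a<..b}"] unfolding D_def Ceq by auto
  then have "emeasure M C \<noteq> 0" using \<open>emeasure D {a<..b} \<noteq> 0\<close> by simp
  then have "C \<in> sets M" using emeasure_notin_sets by blast
  moreover have "measure M C = measure D {a<..b}" using e by (simp add: measure_def)
  ultimately show "{\<omega> \<in> space M. a < f \<omega> \<and> f \<omega> \<le> b} \<in> sets M \<and>
          measure M {\<omega> \<in> space M. a < f \<omega> \<and> f \<omega> \<le> b} = measure (distr M borel f) {a<..b}"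
    by (simp add: C_def D_def)
qed

lemma good_K:
  fixes L :: "real measure" and \<eta> K0 :: real
  assumes L: "real_distribution L" and \<eta>: "\<eta> > 0"
  shows "\<exists>K. K > K0 \<and> K > 0 \<and> isCont (cdf L) K \<and> isCont (cdf L) (- K) \<and> cdf L K - cdf L (- K) > 1 - \<eta>"
proof -
  interpret real_distribution L by (rule L)
  have "eventually (\<lambda>x. cdf L x > 1 - \<eta>/2) at_top"
    using cdf_lim_at_top_prob \<eta> by (intro order_tendstoD) auto
  then obtain A where A: "\<And>x. x \<ge> A \<Longrightarrow> cdf L x > 1 - \<eta>/2" by (auto simp: eventually_at_top_linorder)
  have "eventually (\<lambda>x. cdf L x < \<eta>/2) at_bot"
    using cdf_lim_at_bot \<eta> by (intro order_tendstoD) auto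
  then obtain B where B: "\<And>x. x \<le> B \<Longrightarrow> cdf L x < \<eta>/2" by (auto simp: eventually_at_bot_linorder)
  define lo where "lo = max (max A (- B)) (max K0 0)"
  define Atoms where "Atoms = {x. measure L {x} > 0}"
  have cA: "countable Atoms" unfolding Atoms_def by (rule countable_atoms)
  have cA2: "countable (Atoms \<union> uminus ` Atoms)" using cA by auto
  have unc: "uncountable {lo<..<lo+1}" by (simp add: uncountable_open_interval)
  have "\<not> ({lo<..<lo+1} \<subseteq> Atoms \<union> uminus ` Atoms)"
  proof
    assume "{lo<..<lo+1} \<subseteq> Atoms \<union> uminus ` Atoms"
    then have "countable {lo<..<lo+1}" using cA2 by (rule countable_subset)
    then show False using unc by simp
  qed
  then obtain K where K: "K \<in> {lo<..<lo+1}" "K \<notin> Atoms \<union> uminus ` Atoms"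
    by (auto simp: subset_iff)
  have nK: "- K \<notin> Atoms" using K(2) by (metis UnI2 image_eqI minus_minus)
  have c1: "isCont (cdf L) K" using K(2) isCont_cdf measure_nonneg[of L "{K}"] unfolding Atoms_def by auto
  have c2: "isCont (cdf L) (- K)" using nK isCont_cdf measure_nonneg[of L "{-K}"] unfolding Atoms_def by auto
  have "K \<ge> A" "-K \<le> B" "K > K0" "K > 0" using K(1) unfolding lo_def by auto
  then have "cdf L K > 1 - \<eta>/2" "cdf L (-K) < \<eta>/2" using A B by auto
  then show ?thesis using c1 c2 \<open>K > K0\<close> \<open>K > 0\<close> by (intro exI[of _ K]) auto
qed

lemma inv_real_lim:
  assumes "filterlim n at_top sequentially"
  shows "((\<lambda>k. 1 / real (n k)) \<longlongrightarrow> 0) sequentially"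
proof -
  have "filterlim (\<lambda>k. real (n k)) at_top sequentially"
    by (rule filterlim_compose[OF filterlim_real_sequentially assms])
  then have "((\<lambda>k. inverse (real (n k))) \<longlongrightarrow> 0) sequentially"
    by (rule tendsto_inverse_0_at_top)
  then show ?thesis by (simp add: inverse_eq_divide)
qed

lemma inv_sqrt_lim:
  assumes "filterlim n at_top sequentially"
  shows "((\<lambda>k. 1 / sqrt (real (n k))) \<longlongrightarrow> 0) sequentially"
proof -
  have "((\<lambda>k. sqrt (1 / real (n k))) \<longlongrightarrow> sqrt 0) sequentially"
    by (intro tendsto_real_sqrt inv_real_lim assms)
  then show ?thesis by (simp add: real_sqrt_divide)
qed

lemma mu_identity:
  fixes nn pp :: real
  assumes "nn > 0" "pp > 0"
  shows "nn * (1 + sqrt (pp / nn))^2 = nn + pp + 2 * sqrt (nn * pp)"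
proof -
  have s: "sqrt (pp / nn) ^ 2 = pp / nn" using assms by simp
  have t: "nn * sqrt (pp / nn) = sqrt (nn * pp)"
  proof -
    have "nn = sqrt nn * sqrt nn" using assms by simp
    then have "nn * sqrt (pp / nn) = sqrt nn * (sqrt nn * sqrt (pp / nn))" by (metis mult.assoc)
    also have "sqrt nn * sqrt (pp / nn) = sqrt pp" using assms
      by (simp add: real_sqrt_mult[symmetric])
    finally show ?thesis by (simp add: real_sqrt_mult)
  qed
  have "nn * (1 + sqrt (pp / nn))^2 = nn + 2 * (nn * sqrt (pp / nn)) + nn * sqrt (pp / nn) ^ 2"
    by (simp add: power2_eq_square algebra_simps)
  also have "\<dots> = nn + pp + 2 * sqrt (nn * pp)" using s t assms by simp
  finally show ?thesis .
qed

lemma a_lim: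
  fixes n p m :: "nat \<Rightarrow> nat" and q :: nat and \<gamma> :: ereal and \<kappa> :: real
  assumes n_lim: "filterlim n at_top sequentially"
    and p_lim: "filterlim p at_top sequentially"
    and gamma_nonneg: "\<gamma> \<ge> 0"
    and np_lim: "((\<lambda>k. ereal (real (n k) / real (p k))) \<longlongrightarrow> \<gamma>) sequentially"
    and kappa_ge: "\<kappa> \<ge> 1"
    and mp_lim: "((\<lambda>k. real (m k) / real (p k)) \<longlongrightarrow> \<kappa>) sequentially"
  shows "((\<lambda>k. real (n k) * mu_np (n k) (p k) / real (n k + p k + q * m k + 1))
            \<longlongrightarrow> limit_const q \<gamma> \<kappa>) sequentially"
proof -
  define f where "f = (\<lambda>k. real (n k) * mu_np (n k) (p k) / real (n k + p k + q * m k + 1))"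
  have ev: "eventually (\<lambda>k. n k \<ge> 1 \<and> p k \<ge> 1) sequentially"
    using n_lim p_lim by (simp add: filterlim_at_top eventually_conj)
  have fk: "f k = (real (n k) + real (p k) + 2 * sqrt (real (n k) * real (p k))) /
                  (real (n k) + real (p k) + real q * real (m k) + 1)"
    if "n k \<ge> 1" "p k \<ge> 1" for k
    using mu_identity[of "real (n k)" "real (p k)"] that unfolding f_def mu_np_def by simp
  show ?thesis
  proof (cases "\<gamma> = \<infinity>")
    case True
    define r where "r = (\<lambda>k. real (n k) / real (p k))"
    have rtop: "filterlim r at_top sequentially"
      using np_lim True unfolding r_def by (simp add: tendsto_PInfty_eq_at_top)
    then have ir: "((\<lambda>k. inverse (r k)) \<longlongrightarrow> 0) sequentially" by (rule tendsto_inverse_0_at_top)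
    have evr: "eventually (\<lambda>k. r k > 0) sequentially" using rtop by (simp add: filterlim_at_top_dense)
    have g: "((\<lambda>k. (1 + inverse (r k) + 2 * sqrt (inverse (r k))) /
                 (1 + inverse (r k) + real q * ((real (m k) / real (p k)) * inverse (r k)) + 1 / real (n k)))
             \<longlongrightarrow> (1 + 0 + 2 * sqrt 0) / (1 + 0 + real q * (\<kappa> * 0) + 0)) sequentially"
      by (intro tendsto_intros ir mp_lim inv_real_lim n_lim) simp
    have "eventually (\<lambda>k. (1 + inverse (r k) + 2 * sqrt (inverse (r k))) /
                 (1 + inverse (r k) + real q * ((real (m k) / real (p k)) * inverse (r k)) + 1 / real (n k))
              = f k) sequentially"
      using ev
    proof eventually_elim
      case (elim k)
      define nn where "nn = real (n k)"
      define pp where "pp = real (p k)"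
      have nn: "nn > 0" and pp: "pp > 0" using elim by (auto simp: nn_def pp_def)
      have ri: "inverse (r k) = pp / nn" by (simp add: r_def nn_def pp_def)
      have sq: "sqrt (nn * pp) / nn = sqrt (pp / nn)"
      proof -
        have e1: "sqrt nn * sqrt nn = nn" using nn by simp
        have "sqrt (nn * pp) / nn = (sqrt nn * sqrt pp) / (sqrt nn * sqrt nn)"
          using e1 by (simp only: real_sqrt_mult)
        also have "\<dots> = sqrt pp / sqrt nn" by (rule mult_divide_mult_cancel_left) (use nn in simp)
        also have "\<dots> = sqrt (pp / nn)" by (simp add: real_sqrt_divide)
        finally show ?thesis .
      qed
      have "f k = (nn + pp + 2 * sqrt (nn * pp)) / (nn + pp + real q * real (m k) + 1)"
        using fk[OF elim[THEN conjunct1] elim[THEN conjunct2]] by (simp add: nn_def pp_def)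
      also have "\<dots> = ((nn + pp + 2 * sqrt (nn * pp)) / nn) / ((nn + pp + real q * real (m k) + 1) / nn)"
        using nn by simp
      also have "(nn + pp + 2 * sqrt (nn * pp)) / nn = 1 + pp / nn + 2 * sqrt (pp / nn)"
        using nn sq by (simp add: add_divide_distrib)
      also have "(nn + pp + real q * real (m k) + 1) / nn = 1 + pp / nn + real q * ((real (m k) / pp) * (pp / nn)) + 1 / nn"
        using nn pp by (simp add: add_divide_distrib)
      finally show ?case using ri by (simp add: pp_def nn_def)
    qed
    then have "(f \<longlongrightarrow> 1) sequentially" using g by (simp add: tendsto_cong)
    then show ?thesis using True by (simp add: f_def limit_const_def)
  next
    case False
    define g where "g = real_of_ereal \<gamma>"
    have ge: "\<gamma> = ereal g" using False gamma_nonneg unfolding g_def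
      by (cases \<gamma>) auto
    have g0: "g \<ge> 0" using gamma_nonneg ge by simp
    define r where "r = (\<lambda>k. real (n k) / real (p k))"
    have rl: "(r \<longlongrightarrow> g) sequentially" using np_lim ge unfolding r_def by simp
    have den: "g + 1 + real q * \<kappa> + 0 \<noteq> 0" 
    proof -
      have "real q * \<kappa> \<ge> 0" using kappa_ge by simp
      then show ?thesis using g0 by linarith
    qed
    have lim: "((\<lambda>k. (r k + 1 + 2 * sqrt (r k)) /
                 (r k + 1 + real q * (real (m k) / real (p k)) + 1 / real (p k)))
             \<longlongrightarrow> (g + 1 + 2 * sqrt g) / (g + 1 + real q * \<kappa> + 0)) sequentially"
      by (intro tendsto_intros rl mp_lim inv_real_lim p_lim den)
    have "eventually (\<lambda>k. (r k + 1 + 2 * sqrt (r k)) /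
                 (r k + 1 + real q * (real (m k) / real (p k)) + 1 / real (p k)) = f k) sequentially"
      using ev
    proof eventually_elim
      case (elim k)
      define nn where "nn = real (n k)"
      define pp where "pp = real (p k)"
      have nn: "nn > 0" and pp: "pp > 0" using elim by (auto simp: nn_def pp_def)
      have sq: "sqrt (nn * pp) / pp = sqrt (nn / pp)"
      proof -
        have e1: "sqrt pp * sqrt pp = pp" using pp by simp
        have "sqrt (nn * pp) / pp = (sqrt nn * sqrt pp) / (sqrt pp * sqrt pp)"
          using e1 by (simp only: real_sqrt_mult)
        also have "\<dots> = sqrt nn / sqrt pp" by (subst mult.commute, rule mult_divide_mult_cancel_left) (use pp in simp)
        also have "\<dots> = sqrt (nn / pp)" by (simp add: real_sqrt_divide)
        finally show ?thesis .
      qed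
      have "f k = (nn + pp + 2 * sqrt (nn * pp)) / (nn + pp + real q * real (m k) + 1)"
        using fk[OF elim[THEN conjunct1] elim[THEN conjunct2]] by (simp add: nn_def pp_def)
      also have "\<dots> = ((nn + pp + 2 * sqrt (nn * pp)) / pp) / ((nn + pp + real q * real (m k) + 1) / pp)"
        using pp by simp
      also have "(nn + pp + 2 * sqrt (nn * pp)) / pp = nn / pp + 1 + 2 * sqrt (nn / pp)"
        using pp sq by (simp add: add_divide_distrib)
      also have "(nn + pp + real q * real (m k) + 1) / pp = nn / pp + 1 + real q * (real (m k) / pp) + 1 / pp"
        using pp by (simp add: add_divide_distrib)
      finally show ?case by (simp add: r_def pp_def nn_def)
    qed
    then have "(f \<longlongrightarrow> (g + 1 + 2 * sqrt g) / (g + 1 + real q * \<kappa> + 0)) sequentially"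
      using lim by (simp add: tendsto_cong)
    moreover have "(g + 1 + 2 * sqrt g) / (g + 1 + real q * \<kappa> + 0) = limit_const q \<gamma> \<kappa>"
      using den False unfolding limit_const_def g_def[symmetric] by (simp add: field_simps)
    ultimately show ?thesis by (simp add: f_def)
  qed
qed

lemma sigma_pos:
  assumes "n \<ge> 1" "p \<ge> 1"
  shows "sigma_np n p > 0"
proof -
  have a: "1 / sqrt (real n) + 1 / sqrt (real p) > 0" using assms by (intro add_pos_pos) auto
  then show ?thesis using assms unfolding sigma_np_def by (intro mult_pos_pos divide_pos_pos add_pos_pos) auto
qed

lemma sqrt_over:
  fixes nn N :: real
  assumes "nn > 0" "N \<ge> nn"
  shows "sqrt nn / N \<le> 1 / sqrt nn"
proof -
  have "sqrt nn / N \<le> sqrt nn / nn" using assms by (intro divide_left_mono) auto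
  also have "sqrt nn / nn = 1 / sqrt nn"
  proof -
    have "nn = sqrt nn * sqrt nn" using assms by simp
    then show ?thesis using assms by (metis div_by_1 mult_divide_mult_cancel_left_if real_sqrt_eq_zero_cancel_iff
        less_irrefl mult_1_right)
  qed
  finally show ?thesis .
qed

lemma b_bound:
  assumes n: "n \<ge> 1" and p: "p \<ge> 1"
  shows "real n * sigma_np n p / real (n + p + q * m + 1) \<le> 2 * (1 / sqrt (real n) + 1 / sqrt (real p))"
proof -
  define nn where "nn = real n"
  define pp where "pp = real p"
  define N where "N = real (n + p + q * m + 1)"
  have nn: "nn \<ge> 1" and pp: "pp \<ge> 1" using n p by (auto simp: nn_def pp_def)
  have Nn: "N \<ge> nn" and Np: "N \<ge> pp" by (auto simp: N_def nn_def pp_def)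
  define x where "x = 1 / sqrt nn + 1 / sqrt pp"
  have x0: "x \<ge> 0" using nn pp by (simp add: x_def)
  have x2: "x \<le> 2"
  proof -
    have "1 / sqrt nn \<le> 1" using nn by simp
    moreover have "1 / sqrt pp \<le> 1" using pp by simp
    ultimately show ?thesis by (simp add: x_def)
  qed
  have w: "x powr (1/3) \<le> 2"
  proof (cases "x \<le> 1")
    case True then show ?thesis using powr_le1[of "1/3" x] x0 by simp
  next
    case False
    then have "x powr (1/3) \<le> x powr 1" by (intro powr_mono) auto
    then show ?thesis using x2 x0 by simp
  qed
  have w0: "x powr (1/3) \<ge> 0" by simp
  have "real n * sigma_np n p / N = (sqrt nn + sqrt pp) * x powr (1/3) / N"
    using nn unfolding sigma_np_def nn_def[symmetric] pp_def[symmetric] x_def by simp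
  also have "\<dots> \<le> (sqrt nn + sqrt pp) * 2 / N"
    using w Nn nn pp by (intro divide_right_mono mult_left_mono) auto
  also have "\<dots> = 2 * (sqrt nn / N + sqrt pp / N)" by (simp add: add_divide_distrib algebra_simps)
  also have "\<dots> \<le> 2 * (1 / sqrt nn + 1 / sqrt pp)"
    using sqrt_over[of nn N] sqrt_over[of pp N] nn pp Nn Np by simp
  finally show ?thesis by (simp add: N_def nn_def pp_def)
qed

lemma b_lim:
  assumes n_lim: "filterlim n at_top sequentially" and p_lim: "filterlim p at_top sequentially"
  shows "((\<lambda>k. real (n k) * sigma_np (n k) (p k) / real (n k + p k + q * m k + 1)) \<longlongrightarrow> 0) sequentially"
proof (rule tendsto_sandwich)
  have ev: "eventually (\<lambda>k. n k \<ge> 1 \<and> p k \<ge> 1) sequentially"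
    using n_lim p_lim by (simp add: filterlim_at_top eventually_conj)
  show "eventually (\<lambda>k. 0 \<le> real (n k) * sigma_np (n k) (p k) / real (n k + p k + q * m k + 1)) sequentially"
    using ev
  proof eventually_elim
    case (elim k)
    then have "sigma_np (n k) (p k) > 0" using sigma_pos by auto
    then show ?case by simp
  qed
  show "eventually (\<lambda>k. real (n k) * sigma_np (n k) (p k) / real (n k + p k + q * m k + 1)
          \<le> 2 * (1 / sqrt (real (n k)) + 1 / sqrt (real (p k)))) sequentially"
    using ev by eventually_elim (use b_bound in auto)
  show "((\<lambda>k. 0::real) \<longlongrightarrow> 0) sequentially" by simp
  show "((\<lambda>k. 2 * (1 / sqrt (real (n k)) + 1 / sqrt (real (p k)))) \<longlongrightarrow> 0) sequentially"
    using tendsto_mult[OF tendsto_const tendsto_add[OF inv_sqrt_lim[OF n_lim] inv_sqrt_lim[OF p_lim]], of 2]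
    by simp
qed

lemma pointwise:
  fixes t a b c K Z \<Lambda> \<mu>0 \<sigma> N nn mp :: real
  assumes "\<bar>mp - nn * \<Lambda> / N\<bar> \<le> t" "\<sigma> > 0" "Z = (\<Lambda> - \<mu>0) / \<sigma>"
    "- K < Z" "Z \<le> K" "a = nn * \<mu>0 / N" "b = nn * \<sigma> / N" "b \<ge> 0"
    "\<bar>a - c\<bar> < e" "b * K < e" "t = e"
  shows "\<bar>mp - c\<bar> < 3 * e"
proof -
  have L: "\<Lambda> = \<mu>0 + \<sigma> * Z" using assms(2,3) by simp
  have "nn * \<Lambda> / N = a + b * Z" unfolding L assms(6,7) by (simp add: algebra_simps add_divide_distrib)
  moreover have "\<bar>b * Z\<bar> \<le> b * K"
  proof -
    have "\<bar>Z\<bar> \<le> K" using assms(4,5) by linarith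
    then have "b * \<bar>Z\<bar> \<le> b * K" using assms(8) by (rule mult_left_mono)
    then show ?thesis using assms(8) by (simp add: abs_mult)
  qed
  ultimately show ?thesis using assms(1,9,10,11) by linarith
qed

theorem mainTheorem11:
  fixes q :: nat and \<alpha> :: real and \<gamma> :: ereal and \<kappa> :: real
    and n p m :: "nat \<Rightarrow> nat"
    and M :: "nat \<Rightarrow> 'a measure"
    and X :: "nat \<Rightarrow> nat \<Rightarrow> nat \<Rightarrow> 'a \<Rightarrow> real"
  assumes q_pos: "q \<ge> 1"
    and alpha_pos: "\<alpha> > 0"
    and n_lim: "filterlim n at_top sequentially"
    and p_lim: "filterlim p at_top sequentially"
    and gamma_nonneg: "\<gamma> \<ge> 0"
    and np_lim: "((\<lambda>k. ereal (real (n k) / real (p k))) \<longlongrightarrow> \<gamma>) sequentially"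
    and kappa_ge: "\<kappa> \<ge> 1"
    and mp_lim: "((\<lambda>k. real (m k) / real (p k)) \<longlongrightarrow> \<kappa>) sequentially"
    and m_ge_p: "\<And>k. m k \<ge> p k"
    and prob: "\<And>k. prob_space (M k)"
    and indep: "\<And>k. prob_space.indep_vars (M k) (\<lambda>_. borel) (\<lambda>(i, j). X k i j)
                        ({..<n k} \<times> {..<p k})"
    and gauss: "\<And>k i j. i < n k \<Longrightarrow> j < p k \<Longrightarrow>
                   distributed (M k) lborel (X k i j) std_normal_density"
    and tw: "\<exists>L. real_distribution L \<and>
               weak_conv_m (\<lambda>k. distr (M k) borel (\<lambda>\<omega>.
                 (lambda_max (sample_cov (n k) (p k) (\<lambda>i j. X k i j \<omega>)) - mu_np (n k) (p k))
                   / sigma_np (n k) (p k))) L"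
  shows "\<forall>\<epsilon>>0. ((\<lambda>k. measure (M k) {\<omega> \<in> space (M k).
            \<bar>map_lambda_max (n k) (p k) (m k) q \<alpha> (sample_cov (n k) (p k) (\<lambda>i j. X k i j \<omega>))
               - limit_const q \<gamma> \<kappa>\<bar> > \<epsilon>}) \<longlongrightarrow> 0) sequentially"
proof (intro allI impI)
  fix \<epsilon> :: real assume \<epsilon>: "\<epsilon> > 0"
  define c where "c = limit_const q \<gamma> \<kappa>"
  define Zf where "Zf = (\<lambda>k \<omega>. (lambda_max (sample_cov (n k) (p k) (\<lambda>i j. X k i j \<omega>)) - mu_np (n k) (p k))
                   / sigma_np (n k) (p k))"
  define D where "D = (\<lambda>k. distr (M k) borel (Zf k))"
  obtain L where L: "real_distribution L" and wc: "weak_conv_m D L"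
    using tw unfolding D_def Zf_def by blast
  define A where "A = (\<lambda>k. {\<omega> \<in> space (M k).
            \<bar>map_lambda_max (n k) (p k) (m k) q \<alpha> (sample_cov (n k) (p k) (\<lambda>i j. X k i j \<omega>)) - c\<bar> > \<epsilon>})"
  define P where "P = (\<lambda>k. measure (M k) (A k))"
  have "(P \<longlongrightarrow> 0) sequentially"
  proof (rule order_tendstoI)
    fix a :: real assume "a < 0"
    then show "eventually (\<lambda>k. a < P k) sequentially"
      by (intro always_eventually allI) (simp add: P_def less_le_trans[OF _ measure_nonneg])
  next
    fix \<eta> :: real assume \<eta>: "\<eta> > 0"
    define \<eta>' where "\<eta>' = min \<eta> 1"
    have \<eta>': "\<eta>' > 0" "\<eta>' \<le> 1" "\<eta>' \<le> \<eta>" using \<eta> by (auto simp: \<eta>'_def)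
    obtain K where K: "K > 0" "isCont (cdf L) K" "isCont (cdf L) (- K)"
        "cdf L K - cdf L (- K) > 1 - \<eta>'"
      using good_K[OF L \<eta>'(1), of 0] by auto
    have l1: "((\<lambda>k. cdf (D k) K) \<longlongrightarrow> cdf L K) sequentially"
      using wc K(2) unfolding weak_conv_m_def weak_conv_def by blast
    have l2: "((\<lambda>k. cdf (D k) (- K)) \<longlongrightarrow> cdf L (- K)) sequentially"
      using wc K(3) unfolding weak_conv_m_def weak_conv_def by blast
    have evC: "eventually (\<lambda>k. cdf (D k) K - cdf (D k) (- K) > 1 - \<eta>') sequentially"
      using tendsto_diff[OF l1 l2] K(4) by (rule order_tendstoD)
    have ev1: "eventually (\<lambda>k. n k \<ge> 1 \<and> p k \<ge> 1) sequentially"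
      using n_lim p_lim by (simp add: filterlim_at_top eventually_conj)
    define t where "t = \<epsilon> / 3"
    have t: "t > 0" using \<epsilon> by (simp add: t_def)
    define B where "B = real q * \<alpha> ^ q / t ^ q"
    have "filterlim (\<lambda>k. real (n k)) at_top sequentially"
      by (rule filterlim_compose[OF filterlim_real_sequentially n_lim])
    then have evB: "eventually (\<lambda>k. real (n k) \<ge> B) sequentially" by (simp add: filterlim_at_top)
    have ev2: "eventually (\<lambda>k. real (n k + p k + q * m k + 1) * t ^ q \<ge> real q * \<alpha> ^ q) sequentially"
      using evB
    proof eventually_elim
      case (elim k)
      have "real (n k) \<le> real (n k + p k + q * m k + 1)" by (rule of_nat_mono) simp
      then have "real (n k + p k + q * m k + 1) \<ge> B" using elim by linarith
      then have "real (n k + p k + q * m k + 1) * t ^ q \<ge> B * t ^ q" using t by (intro mult_right_mono) auto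
      moreover have "B * t ^ q = real q * \<alpha> ^ q" using t by (simp add: B_def)
      ultimately show ?case by simp
    qed
    have ev3: "eventually (\<lambda>k. dist (real (n k) * mu_np (n k) (p k) / real (n k + p k + q * m k + 1)) c < t) sequentially"
      using a_lim[OF n_lim p_lim gamma_nonneg np_lim kappa_ge mp_lim, of q] t unfolding c_def
      by (rule tendstoD)
    have ev4: "eventually (\<lambda>k. real (n k) * sigma_np (n k) (p k) / real (n k + p k + q * m k + 1) < t / K) sequentially"
      using b_lim[OF n_lim p_lim, of q m] t K(1) by (intro order_tendstoD) auto
    show "eventually (\<lambda>k. P k < \<eta>) sequentially"
      using evC ev1 ev2 ev3 ev4
    proof eventually_elim
      case (elim k)
      interpret pk: prob_space "M k" by (rule prob)
      define C where "C = {\<omega> \<in> space (M k). - K < Zf k \<omega> \<and> Zf k \<omega> \<le> K}"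
      have Kle: "- K \<le> K" using K(1) by simp
      have mI: "measure (D k) {-K<..K} = cdf (D k) K - cdf (D k) (- K)"
        unfolding D_def by (rule distr_Ioc(1)[OF prob Kle])
      then have mpos: "measure (D k) {-K<..K} > 0" using elim(1) \<eta>'(2) by simp
      have Cs: "C \<in> sets (M k)" and mC: "measure (M k) C = measure (D k) {-K<..K}"
        using distr_Ioc(2)[OF prob Kle, of k "Zf k"] mpos unfolding C_def D_def by auto
      have sub: "A k \<subseteq> space (M k) - C"
      proof
        fix \<omega> assume \<omega>: "\<omega> \<in> A k"
        show "\<omega> \<in> space (M k) - C"
        proof (rule ccontr)
          assume "\<omega> \<notin> space (M k) - C"
          then have wC: "\<omega> \<in> C" using \<omega> unfolding A_def by auto
          define S where "S = sample_cov (n k) (p k) (\<lambda>i j. X k i j \<omega>)"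
          define N where "N = real (n k + p k + q * m k + 1)"
          have kd: "\<bar>map_lambda_max (n k) (p k) (m k) q \<alpha> S - real (n k) * lambda_max S / N\<bar> \<le> t"
            unfolding S_def N_def
            using key_det[OF q_pos alpha_pos _ _ t elim(3)[unfolded N_def]] elim(2) by auto
          have sp: "sigma_np (n k) (p k) > 0" using sigma_pos elim(2) by auto
          have b0: "real (n k) * sigma_np (n k) (p k) / N \<ge> 0" using sp by (simp add: N_def)
          have bK: "real (n k) * sigma_np (n k) (p k) / N * K < t"
            using elim(5) K(1) unfolding N_def by (simp add: pos_less_divide_eq)
          have "\<bar>map_lambda_max (n k) (p k) (m k) q \<alpha> S - c\<bar> < 3 * t"
            by (rule pointwise[OF kd sp _ _ _ refl refl b0 _ bK refl, of "Zf k \<omega>"])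
               (use wC elim(4) in \<open>auto simp: C_def Zf_def S_def N_def dist_real_def\<close>)
          then show False using \<omega> unfolding A_def S_def t_def by auto
        qed
      qed
      have "P k \<le> measure (M k) (space (M k) - C)"
      proof (cases "A k \<in> sets (M k)")
        case True
        then show ?thesis unfolding P_def using sub Cs by (intro pk.finite_measure_mono) auto
      next
        case False
        then show ?thesis unfolding P_def by (simp add: measure_notin_sets)
      qed
      also have "\<dots> = 1 - measure (M k) C" using Cs by (rule pk.prob_compl)
      also have "\<dots> < \<eta>'" using mC mI elim(1) by simp
      finally show ?case using \<eta>'(3) by simp
    qed
  qed
  then show "((\<lambda>k. measure (M k) {\<omega> \<in> space (M k).
            \<bar>map_lambda_max (n k) (p k) (m k) q \<alpha> (sample_cov (n k) (p k) (\<lambda>i j. X k i j \<omega>))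
               - limit_const q \<gamma> \<kappa>\<bar> > \<epsilon>}) \<longlongrightarrow> 0) sequentially"
    unfolding P_def A_def c_def .
qed

end
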